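(* Let $\mu$ be a cardinal with $\mu=\mu^{<\mu}$, let $\varepsilon<\mu$ be a limit ordinal, and let $P$ be a forcing notion satisfying $*^\varepsilon_\mu$. Then $P$ satisfies the $\mu^+$-chain condition.
   Context: A forcing notion is a quasi order $P$ with a minimal element $\emptyset_P$. Let $D$ be the filter on $\mu^+$ of sets $A$ such that for some club $E$ of $\mu^+$, every $i\in E$ of cofinality $\mu$ is in $A$; "$\forall^D i$" means "for all $i$ in some member of $D$". The game $*^\varepsilon_\mu[P]$ lasts $\varepsilon$ moves. In the $\zeta$-th move: Player I, if $\zeta\neq0$, chooses $\langle q^\zeta_i:i<\mu^+\rangle$ with $q^\zeta_i\in P$ such that for every $\xi<\zeta$, $(\forall^D i)\,p^\xi_i\le q^\zeta_i$, and chooses $f_\zeta:\mu^+\to\mu^+$ with $f_\zeta(i)<i$ for all $i$ in some club of $\mu^+$; if $\zeta=0$, $q^0_i=\emptyset_P$ for all $i$ and $f_0$ is identically $0$. Then Player II chooses $\langle p^\zeta_i:i<\mu^+\rangle$, $p^\zeta_i\in P$, with $(\forall^D i)\,q^\zeta_i\le p^\zeta_i$. Player I wins the play if (he always had a legal move and) there is $E\in D$ such that whenever $\mu<i<j<\mu^+$, $i,j\in E$, $\mathrm{cf}(i)=\mathrm{cf}(j)=\mu$ and $f_\xi(i)=f_\xi(j)$ for all $\xi<\varepsilon$, the set $\{p^\zeta_i:\zeta<\varepsilon\}\cup\{p^\zeta_j:\zeta<\varepsilon\}$ has an upper bound in $P$. $P$ satisfies $*^\varepsilon_\mu$ if Player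 I has a winning strategy in $*^\varepsilon_\mu[P]$. The $\mu^+$-chain condition means every antichain of $P$ has cardinality at most $\mu$. *)

theory Defs
  imports Main
begin

text \<open>Ordinals are represented as elements of the field of a well-order.
  Throughout, r is a well-order (later: cardSuc mu, i.e. mu^+), and
  "i < j" in r means (i,j) : r and i ~= j.\<close>

definition lt_in :: "'b rel \<Rightarrow> 'b \<Rightarrow> 'b \<Rightarrow> bool" where
  "lt_in r i j \<longleftrightarrow> (i, j) \<in> r \<and> i \<noteq> j"

definition club :: "'b rel \<Rightarrow> 'b set \<Rightarrow> bool" where
  "club r C \<longleftrightarrow>
     C \<subseteq> Field r \<and>
     (\<forall>i\<in>Field r. \<exists>j\<in>C. lt_in r i j) \<and>
     (\<forall>j\<in>Field r. (C \<inter> underS r j \<noteq> {} \<and>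
                     (\<forall>k\<in>underS r j. \<exists>c\<in>C \<inter> underS r j. lt_in r k c))
                    \<longrightarrow> j \<in> C)"

definition cof_eq :: "'b rel \<Rightarrow> 'b \<Rightarrow> 'c rel \<Rightarrow> bool" where
  "cof_eq r i k \<longleftrightarrow>
     (\<exists>A. A \<subseteq> underS r i \<and> (\<forall>x\<in>underS r i. \<exists>a\<in>A. (x, a) \<in> r)
          \<and> (card_of A, k) \<in> ordIso) \<and>
     (\<forall>A. A \<subseteq> underS r i \<and> (\<forall>x\<in>underS r i. \<exists>a\<in>A. (x, a) \<in> r)
          \<longrightarrow> (k, card_of A) \<in> ordLeq)"

definition inD :: "'b rel \<Rightarrow> 'c rel \<Rightarrow> 'b set \<Rightarrow> bool" where
  "inD r mu A \<longleftrightarrow> (\<exists>C. club r C \<and> (\<forall>i\<in>C. cof_eq r i mu \<longrightarrow> i \<in> A))"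

text \<open>The condition mu = mu^{<mu}: the set of functions from ordinals below mu to mu
  has cardinality mu.\<close>
definition lt_power_eq :: "'a rel \<Rightarrow> bool" where
  "lt_power_eq mu \<longleftrightarrow>
     (card_of (\<Union>\<alpha>\<in>Field mu. Func (underS mu \<alpha>) (Field mu)), mu) \<in> ordIso"

definition limit_in :: "'a rel \<Rightarrow> 'a \<Rightarrow> bool" where
  "limit_in mu e \<longleftrightarrow> e \<in> Field mu \<and> underS mu e \<noteq> {} \<and>
     (\<forall>z\<in>underS mu e. \<exists>z'\<in>underS mu e. lt_in mu z z')"

definition forcing_notion :: "'p set \<Rightarrow> ('p \<Rightarrow> 'p \<Rightarrow> bool) \<Rightarrow> 'p \<Rightarrow> bool" where
  "forcing_notion P le emp \<longleftrightarrow>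
     emp \<in> P \<and> (\<forall>p\<in>P. le p p) \<and>
     (\<forall>p\<in>P. \<forall>q\<in>P. \<forall>s\<in>P. le p q \<longrightarrow> le q s \<longrightarrow> le p s) \<and>
     (\<forall>p\<in>P. le emp p)"

text \<open>Moves are indexed by zeta in underS mu eps (ordinals below eps);
  the coordinates i range over Field (cardSuc mu) = mu^+.
  A strategy for Player I maps zeta and the history of Player II's moves p^xi (xi < zeta)
  to the move (q^zeta, f_zeta).\<close>

definition restr_hist ::
  "'a rel \<Rightarrow> 'a \<Rightarrow> ('a \<Rightarrow> 'a set \<Rightarrow> 'p) \<Rightarrow> ('a \<Rightarrow> 'a set \<Rightarrow> 'p)" where
  "restr_hist mu z p = (\<lambda>xi i. if xi \<in> underS mu z \<and> i \<in> Field (cardSuc mu)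
                                  then p xi i else undefined)"

definition winning_strategy_I ::
  "'a rel \<Rightarrow> 'a \<Rightarrow> 'p set \<Rightarrow> ('p \<Rightarrow> 'p \<Rightarrow> bool) \<Rightarrow> 'p \<Rightarrow>
   ('a \<Rightarrow> ('a \<Rightarrow> 'a set \<Rightarrow> 'p) \<Rightarrow> ('a set \<Rightarrow> 'p) \<times> ('a set \<Rightarrow> 'a set)) \<Rightarrow> bool" where
  "winning_strategy_I mu eps P le emp \<sigma> \<longleftrightarrow>
    (\<forall>p :: 'a \<Rightarrow> 'a set \<Rightarrow> 'p.
      let r = cardSuc mu;
          q = (\<lambda>z. fst (\<sigma> z (restr_hist mu z p)));
          f = (\<lambda>z. snd (\<sigma> z (restr_hist mu z p)));
          legalI = (\<lambda>z.
             (\<forall>i\<in>Field r. q z i \<in> P \<and> f z i \<in> Field r) \<and>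
             (underS mu z = {} \<longrightarrow>
                (\<forall>i\<in>Field r. q z i = emp \<and> underS r (f z i) = {})) \<and>
             (underS mu z \<noteq> {} \<longrightarrow>
                (\<forall>xi\<in>underS mu z. inD r mu {i. le (p xi i) (q z i)}) \<and>
                (\<exists>C. club r C \<and> (\<forall>i\<in>C. lt_in r (f z i) i))));
          legalII = (\<lambda>z.
             (\<forall>i\<in>Field r. p z i \<in> P) \<and> inD r mu {i. le (q z i) (p z i)})
      in (\<forall>z\<in>underS mu eps. (\<forall>xi\<in>underS mu z. legalII xi) \<longrightarrow> legalI z) \<and>
         ((\<forall>z\<in>underS mu eps. legalII z) \<longrightarrow>
            (\<exists>E. inD r mu E \<and>
               (\<forall>i\<in>E. \<forall>j\<in>E.
                  (mu, Restr r (underS r i)) \<in> ordLess \<and> lt_in r i j \<and>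
                  cof_eq r i mu \<and> cof_eq r j mu \<and>
                  (\<forall>xi\<in>underS mu eps. f xi i = f xi j)
                  \<longrightarrow> (\<exists>u\<in>P. \<forall>z\<in>underS mu eps. le (p z i) u \<and> le (p z j) u)))))"

definition satisfies_star :: "'a rel \<Rightarrow> 'a \<Rightarrow> 'p set \<Rightarrow> ('p \<Rightarrow> 'p \<Rightarrow> bool) \<Rightarrow> 'p \<Rightarrow> bool" where
  "satisfies_star mu eps P le emp \<longleftrightarrow> (\<exists>\<sigma>. winning_strategy_I mu eps P le emp \<sigma>)"

definition antichain :: "'p set \<Rightarrow> ('p \<Rightarrow> 'p \<Rightarrow> bool) \<Rightarrow> 'p set \<Rightarrow> bool" where
  "antichain P le A \<longleftrightarrow> A \<subseteq> P \<and>
     (\<forall>p\<in>A. \<forall>q\<in>A. p \<noteq> q \<longrightarrow> \<not> (\<exists>s\<in>P. le p s \<and> le q s))"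

definition succ_cc :: "'a rel \<Rightarrow> 'p set \<Rightarrow> ('p \<Rightarrow> 'p \<Rightarrow> bool) \<Rightarrow> bool" where
  "succ_cc mu P le \<longleftrightarrow> (\<forall>A. antichain P le A \<longrightarrow> (card_of A, mu) \<in> ordLeq)"

end

theory Submission
  imports Defs
begin
unbundle cardinal_syntax


lemma wo_lt_trans:
  assumes "Well_order r" "lt_in r a b" "lt_in r b c" shows "lt_in r a c"
proof -
  have t: "trans r" and an: "antisym r" using assms(1) by (auto simp: wo_rel_def wo_rel.TRANS wo_rel.ANTISYM)
  have "(a,c) \<in> r" using t assms(2,3) unfolding lt_in_def trans_def by blast
  moreover have "a \<noteq> c" using an assms(2,3) unfolding lt_in_def antisym_def by blast
  ultimately show ?thesis unfolding lt_in_def by simp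
qed

lemma wo_le_lt_trans:
  assumes "Well_order r" "(a,b) \<in> r" "lt_in r b c" shows "lt_in r a c"
  using assms wo_lt_trans[OF assms(1), of a b c] unfolding lt_in_def by blast

lemma wo_lt_le_trans:
  assumes "Well_order r" "lt_in r a b" "(b,c) \<in> r" shows "lt_in r a c"
  using assms wo_lt_trans[OF assms(1), of a b c] unfolding lt_in_def by blast

lemma wo_not_lt_le:
  assumes "Well_order r" "a \<in> Field r" "b \<in> Field r" "\<not> lt_in r a b" shows "(b,a) \<in> r"
proof -
  have "(a,b) \<in> r \<or> (b,a) \<in> r" using assms(1-3) by (simp add: wo_rel_def wo_rel.TOTALS)
  thus ?thesis using assms(2,4) unfolding lt_in_def by auto
qed

lemma wo_refl: assumes "Well_order r" "a \<in> Field r" shows "(a,a) \<in> r"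
  using refl_onD[OF wo_rel.REFL[unfolded wo_rel_def, OF assms(1)] assms(2)] .

lemma wo_lt_irrefl: "Well_order r \<Longrightarrow> lt_in r a a \<Longrightarrow> False"
  by (simp add: lt_in_def)

lemma wo_lt_asym: assumes "Well_order r" "lt_in r a b" "(b,a) \<in> r" shows False
proof -
  have "antisym r" using assms(1) by (simp add: wo_rel_def wo_rel.ANTISYM)
  thus False using assms unfolding lt_in_def antisym_def by blast
qed

lemma lt_in_Field: "lt_in r a b \<Longrightarrow> a \<in> Field r \<and> b \<in> Field r"
  by (auto simp: lt_in_def FieldI1 FieldI2)

lemma underS_lt: "x \<in> underS r j \<longleftrightarrow> lt_in r x j"
  by (auto simp: underS_def lt_in_def)

lemma regular_bounded:
  assumes k: "Card_order k" and inf: "infinite (Field k)" and reg: "regularCard k"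
    and B: "B \<subseteq> Field k" and card: "|B| <o k"
  shows "\<exists>x\<in>Field k. \<forall>b\<in>B. lt_in k b x"
proof -
  have wo: "Well_order k" using k by (simp add: card_order_on_def)
  have "\<not> cofinal B k"
  proof
    assume "cofinal B k"
    hence "|B| =o k" using reg B unfolding regularCard_def by simp
    thus False using card not_ordLess_ordIso by auto
  qed
  then obtain a where a: "a \<in> Field k" and ab: "\<forall>b\<in>B. a = b \<or> (a,b) \<notin> k"
    unfolding cofinal_def by blast
  obtain a' where a': "a' \<in> Field k" "a \<noteq> a'" "(a,a') \<in> k"
    using infinite_Card_order_limit[OF k inf a] by blast
  have aa': "lt_in k a a'" using a' by (simp add: lt_in_def)
  have "\<forall>b\<in>B. lt_in k b a'"
  proof
    fix b assume b: "b \<in> B"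
    have ba: "(b,a) \<in> k"
    proof (cases "a = b")
      case True thus ?thesis using wo_refl[OF wo a] by simp
    next
      case False
      hence nlt: "\<not> lt_in k a b" using ab b by (auto simp: lt_in_def)
      have bF: "b \<in> Field k" using B b by auto
      from wo_not_lt_le[OF wo a bF nlt] show ?thesis .
    qed
    from wo_le_lt_trans[OF wo ba aa'] show "lt_in k b a'" .
  qed
  thus ?thesis using a'(1) by auto
qed



context
  fixes mu :: "'a rel"
  assumes mu: "Card_order mu" and muinf: "infinite (Field mu)"
begin

lemma cs_Card: "Card_order (cardSuc mu)"
  using cardSuc_Card_order[OF mu] .

lemma cs_wo: "Well_order (cardSuc mu)"
  using cs_Card by (simp add: card_order_on_def)

lemma cs_inf: "infinite (Field (cardSuc mu))"
  using cardSuc_finite[OF mu] muinf by simp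

lemma cs_reg: "regularCard (cardSuc mu)"
  using infinite_cardSuc_regularCard[OF muinf mu] .

lemma cs_bounded:
  assumes B: "B \<subseteq> Field (cardSuc mu)" and c: "|B| \<le>o mu"
  shows "\<exists>x\<in>Field (cardSuc mu). \<forall>b\<in>B. lt_in (cardSuc mu) b x"
proof -
  have "|B| <o cardSuc mu" using ordLeq_ordLess_trans[OF c cardSuc_greater[OF mu]] .
  from regular_bounded[OF cs_Card cs_inf cs_reg B this] show ?thesis .
qed

lemma cs_underS_le:
  assumes "x \<in> Field (cardSuc mu)" shows "|underS (cardSuc mu) x| \<le>o mu"
proof -
  have "|underS (cardSuc mu) x| <o cardSuc mu" using card_of_underS[OF cs_Card assms] .
  thus ?thesis using cardSuc_ordLeq_ordLess[OF mu card_of_Card_order] by blast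
qed

lemma cs_succ:
  assumes "x \<in> Field (cardSuc mu)" shows "\<exists>y\<in>Field (cardSuc mu). lt_in (cardSuc mu) x y"
  using infinite_Card_order_limit[OF cs_Card cs_inf assms] by (auto simp: lt_in_def)

lemma club_Field: "club (cardSuc mu) (Field (cardSuc mu))"
  unfolding club_def using cs_succ by blast

lemma inD_Field: assumes "Field (cardSuc mu) \<subseteq> X" shows "inD (cardSuc mu) mu X"
  unfolding inD_def using club_Field assms by blast

end


lemma finite_has_max:
  assumes wo: "Well_order r" and fin: "finite S" and ne: "S \<noteq> {}" and SF: "S \<subseteq> Field r"
  shows "\<exists>m\<in>S. \<forall>z\<in>S. (z,m) \<in> r"
  using fin ne SF
proof (induction S rule: finite_ne_induct)
  case (singleton x)
  then show ?case using wo_refl[OF wo] by auto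
next
  case (insert x F)
  then obtain m where m: "m \<in> F" "\<forall>z\<in>F. (z,m) \<in> r" by auto
  have xF: "x \<in> Field r" and mF: "m \<in> Field r" using insert.prems m(1) by auto
  have tr: "trans r" using wo by (simp add: wo_rel_def wo_rel.TRANS)
  have "(x,m) \<in> r \<or> (m,x) \<in> r" using wo xF mF by (simp add: wo_rel_def wo_rel.TOTALS)
  then show ?case
  proof
    assume "(x,m) \<in> r" thus ?thesis using m by auto
  next
    assume mx: "(m,x) \<in> r"
    have "\<forall>z\<in>insert x F. (z,x) \<in> r"
    proof
      fix z assume "z \<in> insert x F"
      then consider "z = x" | "z \<in> F" by auto
      thus "(z,x) \<in> r"
      proof cases
        case 1 thus ?thesis using wo_refl[OF wo xF] by simp
      next
        case 2 hence "(z,m) \<in> r" using m by auto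
        thus ?thesis using mx tr unfolding trans_def by blast
      qed
    qed
    thus ?thesis by auto
  qed
qed

lemma limit_in_infinite:
  assumes mu: "Card_order mu" and lim: "limit_in mu eps"
  shows "infinite (Field mu)"
proof
  assume fin: "finite (Field mu)"
  have wo: "Well_order mu" using mu by (simp add: card_order_on_def)
  let ?S = "underS mu eps"
  have SF: "?S \<subseteq> Field mu" by (rule Order_Relation.underS_Field)
  have finS: "finite ?S" using finite_subset[OF SF fin] .
  have ne: "?S \<noteq> {}" using lim by (simp add: limit_in_def)
  obtain m where m: "m \<in> ?S" "\<forall>z\<in>?S. (z,m) \<in> mu" using finite_has_max[OF wo finS ne SF] by blast
  obtain z' where z': "z' \<in> ?S" "lt_in mu m z'" using lim m(1) unfolding limit_in_def by blast
  have "(z',m) \<in> mu" using m(2) z'(1) by blast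
  from wo_lt_asym[OF wo z'(2) this] show False .
qed

lemma card_under_less:
  assumes mu: "Card_order mu" and muinf: "infinite (Field mu)" and x: "x \<in> Field mu"
  shows "|under mu x| <o mu"
proof -
  have wo: "Well_order mu" using mu by (simp add: card_order_on_def)
  have sub: "under mu x \<subseteq> underS mu x \<union> {x}" by (auto simp: under_def underS_def)
  have 1: "|underS mu x| <o mu" using card_of_underS[OF mu x] .
  have fx: "finite (Field |{x}| )" by (simp add: Field_card_of)
  have 2: "|{x}| <o mu" using finite_ordLess_infinite[OF card_of_Well_order wo fx muinf] .
  have "|underS mu x \<union> {x}| <o mu" using card_of_Un_ordLess_infinite_Field[OF muinf mu 1 2] .
  from ordLeq_ordLess_trans[OF card_of_mono1[OF sub] this] show ?thesis .
qed

lemma mu_regular: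
  assumes mu: "Card_order mu" and muinf: "infinite (Field mu)" and lp: "lt_power_eq mu"
  shows "regularCard mu"
  unfolding regularCard_def
proof (intro allI impI, elim conjE)
  fix K assume K: "K \<subseteq> Field mu" and cof: "cofinal K mu"
  have wo: "Well_order mu" using mu by (simp add: card_order_on_def)
  have FI: "|Field mu| =o mu" using card_of_Field_ordIso[OF mu] .
  have KF: "|K| \<le>o mu" using ordLeq_ordIso_trans[OF card_of_mono1[OF K] FI] .
  show "|K| =o mu"
  proof (rule ccontr)
    assume ne: "\<not> |K| =o mu"
    have lt: "|K| <o mu" using KF ne ordLeq_iff_ordLess_or_ordIso[of "|K|" mu] by simp
    obtain \<alpha> where \<alpha>: "\<alpha> \<in> Field mu" and iso: "|K| =o Restr mu (underS mu \<alpha>)"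
      using ordLess_iff_ordIso_Restr[OF wo card_of_Well_order, of K] lt by auto
    have FR: "Field (Restr mu (underS mu \<alpha>)) = underS mu \<alpha>"
      using wo wo_rel.underS_ofilter Field_Restr_ofilter unfolding wo_rel_def by fastforce
    have "|K| =o |underS mu \<alpha>|" using card_of_cong[OF iso] FR by (simp add: Field_card_of)
    hence "|underS mu \<alpha>| =o |K|" by (rule ordIso_symmetric)
    then obtain c where c: "bij_betw c (underS mu \<alpha>) K"
      using card_of_ordIso[of "underS mu \<alpha>" K] by auto
    define Fn where "Fn = (\<Union>\<alpha>\<in>Field mu. Func (underS mu \<alpha>) (Field mu))"
    have "|Fn| =o mu" using lp unfolding lt_power_eq_def Fn_def .
    hence "|Fn| =o |Field mu|" using ordIso_transitive[OF _ ordIso_symmetric[OF FI]] by auto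
    hence "|Fn| \<le>o |Field mu|" by (rule ordIso_imp_ordLeq)
    then obtain \<iota> where \<iota>: "inj_on \<iota> Fn" "\<iota> ` Fn \<subseteq> Field mu" using card_of_ordLeq[of Fn "Field mu"] by auto
    define e where "e = inv_into Fn \<iota>"
    define Z where "Z = (\<lambda>d. (\<lambda>\<beta>. e \<beta> d) ` under mu (c d))"
    have Zsmall: "\<exists>y. y \<in> Field mu \<and> y \<notin> Z d" if d: "d \<in> underS mu \<alpha>" for d
    proof (rule ccontr)
      assume "\<not> (\<exists>y. y \<in> Field mu \<and> y \<notin> Z d)"
      hence sub: "Field mu \<subseteq> Z d" by blast
      have "c d \<in> K" using bij_betwE[OF c] d by blast
      hence cd: "c d \<in> Field mu" using K by auto
      have "|Z d| \<le>o |under mu (c d)|" unfolding Z_def by (rule card_of_image)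
      hence "|Field mu| \<le>o |under mu (c d)|" using ordLeq_transitive[OF card_of_mono1[OF sub]] by auto
      hence "|Field mu| <o mu" using ordLeq_ordLess_trans[OF _ card_under_less[OF mu muinf cd]] by auto
      hence "|Field mu| <o |Field mu|" using ordLess_ordIso_trans[OF _ ordIso_symmetric[OF FI]] by auto
      thus False using ordLess_irreflexive by auto
    qed
    define h where "h = (\<lambda>d. if d \<in> underS mu \<alpha> then (SOME y. y \<in> Field mu \<and> y \<notin> Z d) else undefined)"
    have hd: "h d \<in> Field mu \<and> h d \<notin> Z d" if "d \<in> underS mu \<alpha>" for d
      using someI_ex[OF Zsmall[OF that]] that unfolding h_def by simp
    have hFunc: "h \<in> Func (underS mu \<alpha>) (Field mu)"
      unfolding Func_def using hd by (auto simp: h_def)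
    have hFn: "h \<in> Fn" unfolding Fn_def using hFunc \<alpha> by blast
    define \<beta>0 where "\<beta>0 = \<iota> h"
    have b0F: "\<beta>0 \<in> Field mu" using \<iota>(2) hFn unfolding \<beta>0_def by blast
    have eb0: "e \<beta>0 = h" unfolding e_def \<beta>0_def using inv_into_f_f[OF \<iota>(1) hFn] .
    obtain k where k: "k \<in> K" "(\<beta>0, k) \<in> mu" using cof b0F unfolding cofinal_def by blast
    obtain d where d: "d \<in> underS mu \<alpha>" "c d = k" using c k(1) unfolding bij_betw_def by blast
    have "\<beta>0 \<in> under mu (c d)" using k(2) d(2) by (simp add: under_def)
    hence "e \<beta>0 d \<in> Z d" unfolding Z_def by blast
    thus False using hd[OF d(1)] eb0 by simp
  qed
qed

lemma mu_bounded:
  assumes mu: "Card_order mu" and muinf: "infinite (Field mu)" and lp: "lt_power_eq mu"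
    and B: "B \<subseteq> Field mu" and c: "|B| <o mu"
  shows "\<exists>x\<in>Field mu. \<forall>b\<in>B. lt_in mu b x"
  using regular_bounded[OF mu muinf mu_regular[OF mu muinf lp] B c] .



lemma wo_rec:
  assumes wo: "Well_order w"
  shows "\<exists>s. \<forall>a. s a = H (\<lambda>b. if b \<in> underS w a then s b else undefined) a"
proof -
  have wf: "wf (w - Id)" using wo by (simp add: wo_rel_def wo_rel.WF)
  define s where "s = wfrec (w - Id) H"
  have "\<forall>a. s a = H (\<lambda>b. if b \<in> underS w a then s b else undefined) a"
  proof
    fix a
    have "s a = H (cut s (w - Id) a) a" unfolding s_def by (rule wfrec[OF wf])
    moreover have "cut s (w - Id) a = (\<lambda>b. if b \<in> underS w a then s b else undefined)"
      by (auto simp: cut_def underS_def fun_eq_iff)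
    ultimately show "s a = H (\<lambda>b. if b \<in> underS w a then s b else undefined) a" by simp
  qed
  thus ?thesis by blast
qed

lemma small_insert:
  assumes mu: "Card_order mu" and muinf: "infinite (Field mu)" and A: "|A| \<le>o mu"
  shows "|insert x A| \<le>o mu"
proof -
  have wo: "Well_order mu" using mu by (simp add: card_order_on_def)
  have fx: "finite (Field |{x}| )" by (simp add: Field_card_of)
  have "|{x}| <o mu" using finite_ordLess_infinite[OF card_of_Well_order wo fx muinf] .
  hence 1: "|{x}| \<le>o mu" by (rule ordLess_imp_ordLeq)
  have "|{x} \<union> A| \<le>o mu" using card_of_Un_ordLeq_infinite_Field[OF muinf 1 A mu] .
  thus ?thesis by simp
qed

lemma subset_Field_le:
  assumes mu: "Card_order mu" and A: "A \<subseteq> Field mu" shows "|A| \<le>o mu"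
  using ordLeq_ordIso_trans[OF card_of_mono1[OF A] card_of_Field_ordIso[OF mu]] .

context
  fixes mu :: "'a rel"
  assumes mu: "Card_order mu" and muinf: "infinite (Field mu)" and lp: "lt_power_eq mu"
begin

lemma key_point:
  fixes G :: "('a set \<Rightarrow> 'a set) set"
  assumes Gc: "|G| \<le>o mu" and GF: "\<forall>g\<in>G. \<forall>k\<in>Field (cardSuc mu). g k \<in> Field (cardSuc mu)"
  shows "\<exists>j\<in>Field (cardSuc mu). cof_eq (cardSuc mu) j mu \<and> mu <o Restr (cardSuc mu) (underS (cardSuc mu) j)
     \<and> underS (cardSuc mu) j \<noteq> {}
     \<and> (\<forall>g\<in>G. \<forall>k. lt_in (cardSuc mu) k j \<longrightarrow> lt_in (cardSuc mu) (g k) j)"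
proof -
  let ?r = "cardSuc mu"
  let ?F = "Field ?r"
  have wo: "Well_order mu" using mu by (simp add: card_order_on_def)
  have rwo: "Well_order ?r" using cs_wo[OF mu muinf] .
  have FI: "|Field mu| =o mu" using card_of_Field_ordIso[OF mu] .
  obtain b0 where b0: "b0 \<in> ?F" "mu =o Restr ?r (underS ?r b0)"
    using ordLess_iff_ordIso_Restr[OF rwo wo] cardSuc_greater[OF mu] by blast
  define Bx where "Bx = (\<lambda>x. insert x ((\<lambda>(g,k). g k) ` (G \<times> insert x (underS ?r x))))"
  define Gx where "Gx = (\<lambda>x. if x \<in> ?F then (SOME y. y \<in> ?F \<and> (\<forall>b\<in>Bx x. lt_in ?r b y)) else b0)"
  have Gx: "Gx x \<in> ?F \<and> (x \<in> ?F \<longrightarrow> (\<forall>b\<in>Bx x. lt_in ?r b (Gx x)))" for x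
  proof (cases "x \<in> ?F")
    case False thus ?thesis using b0 by (simp add: Gx_def)
  next
    case True
    have u: "underS ?r x \<subseteq> ?F" by (rule Order_Relation.underS_Field)
    have 1: "|insert x (underS ?r x)| \<le>o mu"
      using small_insert[OF mu muinf cs_underS_le[OF mu muinf True]] .
    have 2: "|G \<times> insert x (underS ?r x)| \<le>o mu"
      using card_of_Times_ordLeq_infinite_Field[OF muinf Gc 1 mu] .
    have 3: "|(\<lambda>(g,k). g k) ` (G \<times> insert x (underS ?r x))| \<le>o mu"
      using ordLeq_transitive[OF card_of_image 2] .
    have c: "|Bx x| \<le>o mu" unfolding Bx_def using small_insert[OF mu muinf 3] .
    have sub: "Bx x \<subseteq> ?F" unfolding Bx_def using True u GF by auto
    have "\<exists>y. y \<in> ?F \<and> (\<forall>b\<in>Bx x. lt_in ?r b y)" using cs_bounded[OF mu muinf sub c] by blast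
    from someI_ex[OF this] show ?thesis using True by (simp add: Gx_def)
  qed
  have Gx_gt: "lt_in ?r x (Gx x)" if "x \<in> ?F" for x
    using Gx[of x] that by (auto simp: Bx_def)
  have Gx_g: "lt_in ?r (g k) (Gx x)" if "x \<in> ?F" "g \<in> G" "k = x \<or> lt_in ?r k x" for x g k
  proof -
    have "k \<in> insert x (underS ?r x)" using that(3) by (auto simp: underS_lt)
    hence "g k \<in> Bx x" unfolding Bx_def using that(2) by blast
    thus ?thesis using Gx[of x] that(1) by blast
  qed
  define H where "H = (\<lambda>(f::'a \<Rightarrow> 'a set) \<alpha>. SOME y. y \<in> ?F \<and> lt_in ?r b0 y \<and> (\<forall>\<beta>\<in>underS mu \<alpha>. lt_in ?r (Gx (f \<beta>)) y))"
  obtain s where srec: "\<forall>a. s a = H (\<lambda>b. if b \<in> underS mu a then s b else undefined) a"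
    using wo_rec[OF wo, of H] by blast
  have sH: "s a = H s a" for a
  proof -
    have "H (\<lambda>b. if b \<in> underS mu a then s b else undefined) a = H s a"
      unfolding H_def by (rule arg_cong[where f=Eps]) (auto simp: fun_eq_iff)
    thus ?thesis using srec by simp
  qed
  have sprop: "s a \<in> ?F \<and> lt_in ?r b0 (s a) \<and> (\<forall>\<beta>\<in>underS mu a. lt_in ?r (Gx (s \<beta>)) (s a))" for a
  proof -
    define B where "B = insert b0 ((\<lambda>\<beta>. Gx (s \<beta>)) ` underS mu a)"
    have sub: "B \<subseteq> ?F" unfolding B_def using b0(1) Gx by auto
    have c0: "|underS mu a| \<le>o mu" using subset_Field_le[OF mu Order_Relation.underS_Field] .
    have c1: "|(\<lambda>\<beta>. Gx (s \<beta>)) ` underS mu a| \<le>o mu" using ordLeq_transitive[OF card_of_image c0] .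
    have c: "|B| \<le>o mu" unfolding B_def by (rule small_insert[OF mu muinf c1])
    obtain y where y: "y \<in> ?F" "\<forall>b\<in>B. lt_in ?r b y" using cs_bounded[OF mu muinf sub c] by blast
    have "\<exists>y. y \<in> ?F \<and> lt_in ?r b0 y \<and> (\<forall>\<beta>\<in>underS mu a. lt_in ?r (Gx (s \<beta>)) y)"
      using y unfolding B_def by blast
    from someI_ex[OF this] show ?thesis using sH[of a] unfolding H_def by simp
  qed
  have smono: "lt_in ?r (s \<beta>) (s \<alpha>)" if "lt_in mu \<beta> \<alpha>" for \<alpha> \<beta>
  proof -
    have "lt_in ?r (Gx (s \<beta>)) (s \<alpha>)" using sprop[of \<alpha>] that by (simp add: underS_lt)
    with Gx_gt[OF conjunct1[OF sprop[of \<beta>]]] show ?thesis using wo_lt_trans[OF rwo] by blast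
  qed
  have sinj: "inj_on s (Field mu)"
  proof (rule inj_onI)
    fix x y assume x: "x \<in> Field mu" and y: "y \<in> Field mu" and e: "s x = s y"
    show "x = y"
    proof (rule ccontr)
      assume "x \<noteq> y"
      hence "lt_in mu x y \<or> lt_in mu y x" using wo_not_lt_le[OF wo x y] by (auto simp: lt_in_def)
      thus False using smono e wo_lt_irrefl[OF rwo] by metis
    qed
  qed
  let ?A = "s ` Field mu"
  have AF: "?A \<subseteq> ?F" using sprop by auto
  have Ac: "|?A| \<le>o mu" using ordLeq_ordIso_trans[OF card_of_image FI] .
  define U where "U = {x\<in>?F. \<forall>a\<in>?A. lt_in ?r a x}"
  have Une: "U \<noteq> {}" using cs_bounded[OF mu muinf AF Ac] unfolding U_def by blast
  define j where "j = wo_rel.minim ?r U"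
  have jU: "j \<in> U" unfolding j_def using wo_rel.minim_in[of ?r U] rwo Une by (simp add: wo_rel_def U_def)
  have jmin: "(j, x) \<in> ?r" if "x \<in> U" for x
    unfolding j_def using wo_rel.minim_least[of ?r U x] rwo that by (simp add: wo_rel_def U_def)
  have jF: "j \<in> ?F" and sj: "\<forall>\<alpha>\<in>Field mu. lt_in ?r (s \<alpha>) j" using jU unfolding U_def by auto
  have J2: "\<exists>\<alpha>\<in>Field mu. (x, s \<alpha>) \<in> ?r" if x: "lt_in ?r x j" for x
  proof (rule ccontr)
    assume "\<not> (\<exists>\<alpha>\<in>Field mu. (x, s \<alpha>) \<in> ?r)"
    hence nle: "\<forall>\<alpha>\<in>Field mu. (x, s \<alpha>) \<notin> ?r" by blast
    have xF: "x \<in> ?F" using lt_in_Field[OF x] by blast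
    have "\<forall>a\<in>?A. lt_in ?r a x"
    proof
      fix a assume "a \<in> ?A"
      then obtain \<alpha> where \<alpha>: "\<alpha> \<in> Field mu" "a = s \<alpha>" by blast
      have aF: "a \<in> ?F" using AF \<alpha> by blast
      have "(x, a) \<notin> ?r" using nle \<alpha> by blast
      moreover have "\<not> lt_in ?r a x \<Longrightarrow> (x, a) \<in> ?r" using wo_not_lt_le[OF rwo aF xF] .
      ultimately show "lt_in ?r a x" by blast
    qed
    hence "x \<in> U" unfolding U_def using xF by blast
    hence "(j, x) \<in> ?r" by (rule jmin)
    from wo_lt_asym[OF rwo x this] show False .
  qed
  obtain \<alpha>0 where a0: "\<alpha>0 \<in> Field mu" using muinf by (metis ex_in_conv finite.emptyI)
  have b0j: "lt_in ?r b0 j" using wo_lt_trans[OF rwo conjunct1[OF conjunct2[OF sprop[of \<alpha>0]]]] sj a0 by blast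
  have J3: "\<forall>g\<in>G. \<forall>k. lt_in ?r k j \<longrightarrow> lt_in ?r (g k) j"
  proof (intro ballI allI impI)
    fix g k assume g: "g \<in> G" and k: "lt_in ?r k j"
    obtain \<alpha> where \<alpha>: "\<alpha> \<in> Field mu" "(k, s \<alpha>) \<in> ?r" using J2[OF k] by blast
    obtain \<alpha>' where \<alpha>': "\<alpha>' \<in> Field mu" "\<alpha> \<noteq> \<alpha>'" "(\<alpha>, \<alpha>') \<in> mu"
      using infinite_Card_order_limit[OF mu muinf \<alpha>(1)] by blast
    have "k = s \<alpha> \<or> lt_in ?r k (s \<alpha>)" using \<alpha>(2) by (auto simp: lt_in_def)
    hence 1: "lt_in ?r (g k) (Gx (s \<alpha>))" using Gx_g[OF conjunct1[OF sprop[of \<alpha>]] g] by blast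
    have "\<alpha> \<in> underS mu \<alpha>'" using \<alpha>' by (simp add: underS_def)
    hence 2: "lt_in ?r (Gx (s \<alpha>)) (s \<alpha>')" using sprop[of \<alpha>'] by blast
    have 3: "lt_in ?r (s \<alpha>') j" using sj \<alpha>'(1) by blast
    show "lt_in ?r (g k) j" using wo_lt_trans[OF rwo wo_lt_trans[OF rwo 1 2] 3] .
  qed
  have J4: "cof_eq ?r j mu"
    unfolding cof_eq_def
  proof (intro conjI allI impI)
    have "?A \<subseteq> underS ?r j" using sj by (auto simp: underS_lt)
    moreover have "\<forall>x\<in>underS ?r j. \<exists>a\<in>?A. (x, a) \<in> ?r" using J2 by (auto simp: underS_lt)
    moreover have "|?A| =o mu"
    proof -
      have "bij_betw s (Field mu) ?A" using sinj by (simp add: bij_betw_def)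
      hence "|Field mu| =o |?A|" using card_of_ordIso by blast
      thus ?thesis using ordIso_transitive[OF ordIso_symmetric FI] by blast
    qed
    ultimately show "\<exists>A. A \<subseteq> underS ?r j \<and> (\<forall>x\<in>underS ?r j. \<exists>a\<in>A. (x, a) \<in> ?r) \<and> |A| =o mu"
      by blast
  next
    fix A' assume A': "A' \<subseteq> underS ?r j \<and> (\<forall>x\<in>underS ?r j. \<exists>a\<in>A'. (x, a) \<in> ?r)"
    show "mu \<le>o |A'|"
    proof (rule ccontr)
      assume "\<not> mu \<le>o |A'|"
      hence lt: "|A'| <o mu" using not_ordLeq_iff_ordLess[OF card_of_Well_order wo] by blast
      define \<beta> where "\<beta> = (\<lambda>a. SOME \<alpha>. \<alpha> \<in> Field mu \<and> (a, s \<alpha>) \<in> ?r)"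
      have \<beta>: "\<beta> a \<in> Field mu \<and> (a, s (\<beta> a)) \<in> ?r" if "a \<in> A'" for a
      proof -
        have "lt_in ?r a j" using A' that by (auto simp: underS_lt)
        hence "\<exists>\<alpha>. \<alpha> \<in> Field mu \<and> (a, s \<alpha>) \<in> ?r" using J2 by blast
        from someI_ex[OF this] show ?thesis unfolding \<beta>_def by blast
      qed
      have Bsub: "\<beta> ` A' \<subseteq> Field mu" using \<beta> by blast
      have "|\<beta> ` A'| <o mu" using ordLeq_ordLess_trans[OF card_of_image lt] .
      then obtain \<gamma> where \<gamma>: "\<gamma> \<in> Field mu" "\<forall>b\<in>\<beta> ` A'. lt_in mu b \<gamma>"
        using mu_bounded[OF mu muinf lp Bsub] by blast
      have "s \<gamma> \<in> underS ?r j" using sj \<gamma>(1) by (simp add: underS_lt)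
      then obtain a where a: "a \<in> A'" "(s \<gamma>, a) \<in> ?r" using A' by blast
      have 1: "(a, s (\<beta> a)) \<in> ?r" using \<beta>[OF a(1)] by blast
      have 2: "lt_in ?r (s (\<beta> a)) (s \<gamma>)" using smono \<gamma>(2) a(1) by blast
      have tr: "trans ?r" using rwo by (simp add: wo_rel_def wo_rel.TRANS)
      have "(s \<gamma>, s (\<beta> a)) \<in> ?r" using tr a(2) 1 unfolding trans_def by blast
      from wo_lt_asym[OF rwo 2 this] show False .
    qed
  qed
  have J5: "mu <o Restr ?r (underS ?r j)"
  proof -
    have of1: "wo_rel.ofilter ?r (underS ?r b0)" using rwo by (simp add: wo_rel_def wo_rel.underS_ofilter)
    have of2: "wo_rel.ofilter ?r (underS ?r j)" using rwo by (simp add: wo_rel_def wo_rel.underS_ofilter)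
    have "underS ?r b0 \<subseteq> underS ?r j" using wo_lt_trans[OF rwo _ b0j] by (auto simp: underS_lt)
    moreover have "b0 \<in> underS ?r j - underS ?r b0" using b0j by (auto simp: underS_lt lt_in_def)
    ultimately have "underS ?r b0 < underS ?r j" by blast
    hence "Restr ?r (underS ?r b0) <o Restr ?r (underS ?r j)"
      using ofilter_subset_ordLess[OF rwo of1 of2] by blast
    thus ?thesis using ordIso_ordLess_trans[OF b0(2)] by blast
  qed
  have J6: "underS ?r j \<noteq> {}" using b0j by (auto simp: underS_lt)
  show ?thesis using jF J3 J4 J5 J6 by blast
qed

end



theorem claim1p3:
  fixes mu :: "'a rel" and eps :: 'a
    and P :: "'p set" and le :: "'p \<Rightarrow> 'p \<Rightarrow> bool" and emp :: 'p
  assumes "Card_order mu"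
    and "lt_power_eq mu"
    and "limit_in mu eps"
    and "forcing_notion P le emp"
    and "satisfies_star mu eps P le emp"
  shows "succ_cc mu P le"
  unfolding succ_cc_def
proof (intro allI impI)
  note mu = assms(1) and lp = assms(2) and lim = assms(3) and fn = assms(4)
  fix A assume ac: "antichain P le A"
  show "|A| \<le>o mu"
  proof (rule ccontr)
    assume nA: "\<not> |A| \<le>o mu"
    let ?r = "cardSuc mu"
    let ?F = "Field ?r"
    let ?Y = "underS mu eps"
    have wo: "Well_order mu" using mu by (simp add: card_order_on_def)
    have muinf: "infinite (Field mu)" using limit_in_infinite[OF mu lim] .
    have rwo: "Well_order ?r" using cs_wo[OF mu muinf] .
    have rC: "Card_order ?r" using cs_Card[OF mu muinf] .
    have FI: "|Field mu| =o mu" using card_of_Field_ordIso[OF mu] .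
    have epsF: "eps \<in> Field mu" using lim by (simp add: limit_in_def)
    have YF: "?Y \<subseteq> Field mu" by (rule Order_Relation.underS_Field)
    have emp: "emp \<in> P" and refl: "\<forall>p\<in>P. le p p" and embot: "\<forall>p\<in>P. le emp p"
      using fn by (auto simp: forcing_notion_def)
    have AP: "A \<subseteq> P" and acA: "\<forall>p\<in>A. \<forall>q\<in>A. p \<noteq> q \<longrightarrow> \<not> (\<exists>s\<in>P. le p s \<and> le q s)"
      using ac by (auto simp: antichain_def)
    have "mu <o |A|" using nA not_ordLeq_iff_ordLess[OF wo card_of_Well_order] by blast
    hence "?r \<le>o |A|" using cardSuc_ordLess_ordLeq[OF mu card_of_Card_order] by blast
    hence "|?F| \<le>o |A|" using ordIso_ordLeq_trans[OF card_of_Field_ordIso[OF rC]] by blast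
    then obtain a where a: "inj_on a ?F" "a ` ?F \<subseteq> A" using card_of_ordLeq[of ?F A] by auto
    obtain \<sigma> where ws: "winning_strategy_I mu eps P le emp \<sigma>"
      using assms(5) by (auto simp: satisfies_star_def)
    define H where "H = (\<lambda>(g::'a \<Rightarrow> 'a set \<Rightarrow> 'p) z. if underS mu z = {} then a else fst (\<sigma> z (restr_hist mu z g)))"
    obtain pp where pprec: "\<forall>z. pp z = H (\<lambda>b. if b \<in> underS mu z then pp b else undefined) z"
      using wo_rec[OF wo, of H] by blast
    define q where "q = (\<lambda>z. fst (\<sigma> z (restr_hist mu z pp)))"
    define f where "f = (\<lambda>z. snd (\<sigma> z (restr_hist mu z pp)))"
    have pp: "pp z = (if underS mu z = {} then a else q z)" for z
    proof -
      have "restr_hist mu z (\<lambda>b. if b \<in> underS mu z then pp b else undefined) = restr_hist mu z pp"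
        by (auto simp: restr_hist_def fun_eq_iff)
      thus ?thesis using pprec unfolding H_def q_def by metis
    qed
    have W: "(\<forall>z\<in>?Y. (\<forall>xi\<in>underS mu z. (\<forall>i\<in>?F. pp xi i \<in> P) \<and> inD ?r mu {i. le (q xi i) (pp xi i)}) \<longrightarrow>
             ((\<forall>i\<in>?F. q z i \<in> P \<and> f z i \<in> ?F) \<and>
             (underS mu z = {} \<longrightarrow>
                (\<forall>i\<in>?F. q z i = emp \<and> underS ?r (f z i) = {})) \<and>
             (underS mu z \<noteq> {} \<longrightarrow>
                (\<forall>xi\<in>underS mu z. inD ?r mu {i. le (pp xi i) (q z i)}) \<and>
                (\<exists>C. club ?r C \<and> (\<forall>i\<in>C. lt_in ?r (f z i) i))))) \<and>
         ((\<forall>z\<in>?Y. (\<forall>i\<in>?F. pp z i \<in> P) \<and> inD ?r mu {i. le (q z i) (pp z i)}) \<longrightarrow>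
            (\<exists>E. inD ?r mu E \<and>
               (\<forall>i\<in>E. \<forall>j\<in>E.
                  mu <o Restr ?r (underS ?r i) \<and> lt_in ?r i j \<and>
                  cof_eq ?r i mu \<and> cof_eq ?r j mu \<and>
                  (\<forall>xi\<in>?Y. f xi i = f xi j)
                  \<longrightarrow> (\<exists>u\<in>P. \<forall>z\<in>?Y. le (pp z i) u \<and> le (pp z j) u))))"
      using ws[unfolded winning_strategy_I_def Let_def, THEN spec[of _ pp]] unfolding q_def f_def .
    have trmu: "trans mu" using wo by (simp add: wo_rel_def wo_rel.TRANS)
    have Ytrans: "xi \<in> ?Y" if "z \<in> ?Y" "xi \<in> underS mu z" for z xi
      using that wo_lt_trans[OF wo, of xi z eps] by (simp add: underS_lt)
    have LII: "z \<in> ?Y \<longrightarrow> (\<forall>i\<in>?F. pp z i \<in> P) \<and> inD ?r mu {i. le (q z i) (pp z i)}" for z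
    proof (induction z rule: wo_rel.well_order_induct[OF wo[folded wo_rel_def]])
      case (1 z)
      show ?case
      proof
        assume zY: "z \<in> ?Y"
        have IH: "\<forall>xi\<in>underS mu z. (\<forall>i\<in>?F. pp xi i \<in> P) \<and> inD ?r mu {i. le (q xi i) (pp xi i)}"
        proof
          fix xi assume xi: "xi \<in> underS mu z"
          have "xi \<in> ?Y" using Ytrans[OF zY xi] .
          moreover have "xi \<noteq> z \<and> (xi, z) \<in> mu" using xi by (simp add: underS_def)
          ultimately show "(\<forall>i\<in>?F. pp xi i \<in> P) \<and> inD ?r mu {i. le (q xi i) (pp xi i)}"
            using 1 by blast
        qed
        have LI: "(\<forall>i\<in>?F. q z i \<in> P \<and> f z i \<in> ?F) \<and>
             (underS mu z = {} \<longrightarrow> (\<forall>i\<in>?F. q z i = emp \<and> underS ?r (f z i) = {}))"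
          using W zY IH by blast
        show "(\<forall>i\<in>?F. pp z i \<in> P) \<and> inD ?r mu {i. le (q z i) (pp z i)}"
        proof (cases "underS mu z = {}")
          case True
          hence ppz: "pp z = a" using pp by simp
          have 1: "\<forall>i\<in>?F. pp z i \<in> P" using ppz a(2) AP by auto
          have "?F \<subseteq> {i. le (q z i) (pp z i)}"
          proof
            fix i assume i: "i \<in> ?F"
            have "a i \<in> P" using a(2) AP i by blast
            hence "le emp (a i)" using embot by blast
            thus "i \<in> {i. le (q z i) (pp z i)}" using LI True i ppz by simp
          qed
          thus ?thesis using 1 inD_Field[OF mu muinf] by blast
        next
          case False
          hence ppz: "pp z = q z" using pp by simp
          have 1: "\<forall>i\<in>?F. pp z i \<in> P" using ppz LI by auto
          have "?F \<subseteq> {i. le (q z i) (pp z i)}" using LI ppz refl by auto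
          thus ?thesis using 1 inD_Field[OF mu muinf] by blast
        qed
      qed
    qed
    have LIIall: "\<forall>z\<in>?Y. (\<forall>i\<in>?F. pp z i \<in> P) \<and> inD ?r mu {i. le (q z i) (pp z i)}"
      using LII by blast
    have LI: "\<forall>z\<in>?Y. (\<forall>i\<in>?F. q z i \<in> P \<and> f z i \<in> ?F) \<and>
             (underS mu z = {} \<longrightarrow> (\<forall>i\<in>?F. q z i = emp \<and> underS ?r (f z i) = {})) \<and>
             (underS mu z \<noteq> {} \<longrightarrow> (\<exists>C. club ?r C \<and> (\<forall>i\<in>C. lt_in ?r (f z i) i)))"
    proof
      fix z assume zY: "z \<in> ?Y"
      have "\<forall>xi\<in>underS mu z. (\<forall>i\<in>?F. pp xi i \<in> P) \<and> inD ?r mu {i. le (q xi i) (pp xi i)}"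
        using LIIall Ytrans[OF zY] by blast
      thus "(\<forall>i\<in>?F. q z i \<in> P \<and> f z i \<in> ?F) \<and>
             (underS mu z = {} \<longrightarrow> (\<forall>i\<in>?F. q z i = emp \<and> underS ?r (f z i) = {})) \<and>
             (underS mu z \<noteq> {} \<longrightarrow> (\<exists>C. club ?r C \<and> (\<forall>i\<in>C. lt_in ?r (f z i) i)))"
        using W zY by blast
    qed
    obtain E where E: "inD ?r mu E" and Win: "\<forall>i\<in>E. \<forall>j\<in>E.
                  mu <o Restr ?r (underS ?r i) \<and> lt_in ?r i j \<and>
                  cof_eq ?r i mu \<and> cof_eq ?r j mu \<and>
                  (\<forall>xi\<in>?Y. f xi i = f xi j)
                  \<longrightarrow> (\<exists>u\<in>P. \<forall>z\<in>?Y. le (pp z i) u \<and> le (pp z j) u)"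
      using W LIIall by blast
    obtain CE where CE: "club ?r CE" "\<forall>i\<in>CE. cof_eq ?r i mu \<longrightarrow> i \<in> E"
      using E unfolding inD_def by blast
    define cl where "cl = (\<lambda>\<xi>. if \<xi> \<in> ?Y \<and> underS mu \<xi> \<noteq> {} then (SOME C. club ?r C \<and> (\<forall>i\<in>C. lt_in ?r (f \<xi> i) i)) else ?F)"
    have cl: "club ?r (cl \<xi>) \<and> (\<xi> \<in> ?Y \<and> underS mu \<xi> \<noteq> {} \<longrightarrow> (\<forall>i\<in>cl \<xi>. lt_in ?r (f \<xi> i) i))" for \<xi>
    proof (cases "\<xi> \<in> ?Y \<and> underS mu \<xi> \<noteq> {}")
      case True
      hence "\<exists>C. club ?r C \<and> (\<forall>i\<in>C. lt_in ?r (f \<xi> i) i)" using LI by blast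
      from someI_ex[OF this] show ?thesis using True unfolding cl_def by simp
    next
      case False
      hence "cl \<xi> = ?F" unfolding cl_def by (simp only: if_False)
      thus ?thesis using club_Field[OF mu muinf] False by auto
    qed
    define nx where "nx = (\<lambda>C k. SOME c. c \<in> C \<and> lt_in ?r k c)"
    have nx: "nx C k \<in> C \<and> lt_in ?r k (nx C k)" if "club ?r C" "k \<in> ?F" for C k
    proof -
      have "\<exists>c. c \<in> C \<and> lt_in ?r k c" using that unfolding club_def by blast
      from someI_ex[OF this] show ?thesis unfolding nx_def .
    qed
    have clubF: "C \<subseteq> ?F" if "club ?r C" for C using that unfolding club_def by blast
    define S where "S = {j\<in>?F. j \<in> E \<and> cof_eq ?r j mu \<and> mu <o Restr ?r (underS ?r j) \<and> (\<forall>\<xi>\<in>?Y. lt_in ?r (f \<xi> j) j)}"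
    have claim: "\<exists>i\<in>S. \<exists>j\<in>S. lt_in ?r i j \<and> (\<forall>\<xi>\<in>?Y. f \<xi> i = f \<xi> j)"
    proof (rule ccontr)
      assume NC: "\<not> ?thesis"
      define vec where "vec = (\<lambda>j \<xi>. if \<xi> \<in> ?Y then f \<xi> j else undefined)"
      have SF: "S \<subseteq> ?F" unfolding S_def by blast
      have vinj: "inj_on vec S"
      proof (rule inj_onI)
        fix x y assume x: "x \<in> S" and y: "y \<in> S" and e: "vec x = vec y"
        have ag: "\<forall>\<xi>\<in>?Y. f \<xi> x = f \<xi> y"
        proof
          fix \<xi> assume "\<xi> \<in> ?Y"
          thus "f \<xi> x = f \<xi> y" using fun_cong[OF e, of \<xi>] unfolding vec_def by simp
        qed
        show "x = y"
        proof (rule ccontr)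
          assume "x \<noteq> y"
          moreover have "x \<in> ?F" "y \<in> ?F" using x y SF by auto
          ultimately have "lt_in ?r x y \<or> lt_in ?r y x" using wo_not_lt_le[OF rwo] by (auto simp: lt_in_def)
          thus False using NC x y ag by fastforce
        qed
      qed
      define T where "T = (\<lambda>\<gamma>. {j\<in>S. \<forall>\<xi>\<in>?Y. lt_in ?r (f \<xi> j) \<gamma>})"
      define Fn where "Fn = (\<Union>\<alpha>\<in>Field mu. Func (underS mu \<alpha>) (Field mu))"
      have FnI: "|Fn| =o mu" using lp unfolding lt_power_eq_def Fn_def .
      have Tc: "|T \<gamma>| \<le>o mu" if \<gamma>: "\<gamma> \<in> ?F" for \<gamma>
      proof -
        have "|underS ?r \<gamma>| \<le>o mu" using cs_underS_le[OF mu muinf \<gamma>] .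
        hence "|underS ?r \<gamma>| \<le>o |Field mu|" using ordLeq_ordIso_trans[OF _ ordIso_symmetric[OF FI]] by blast
        then obtain e where e: "inj_on e (underS ?r \<gamma>)" "e ` underS ?r \<gamma> \<subseteq> Field mu"
          using card_of_ordLeq[of "underS ?r \<gamma>" "Field mu"] by auto
        define \<Phi> where "\<Phi> = (\<lambda>j \<xi>. if \<xi> \<in> ?Y then e (f \<xi> j) else undefined)"
        have "inj_on \<Phi> (T \<gamma>)"
        proof (rule inj_onI)
          fix x y assume x: "x \<in> T \<gamma>" and y: "y \<in> T \<gamma>" and eq: "\<Phi> x = \<Phi> y"
          have "vec x = vec y"
          proof
            fix \<xi>
            show "vec x \<xi> = vec y \<xi>"
            proof (cases "\<xi> \<in> ?Y")
              case True
              have "e (f \<xi> x) = e (f \<xi> y)" using fun_cong[OF eq, of \<xi>] True unfolding \<Phi>_def by simp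
              moreover have "f \<xi> x \<in> underS ?r \<gamma>" "f \<xi> y \<in> underS ?r \<gamma>"
                using x y True unfolding T_def by (auto simp: underS_lt)
              ultimately have "f \<xi> x = f \<xi> y" using e(1) unfolding inj_on_def by blast
              thus ?thesis unfolding vec_def by simp
            next
              case False thus ?thesis unfolding vec_def by simp
            qed
          qed
          moreover have "x \<in> S" "y \<in> S" using x y unfolding T_def by auto
          ultimately show "x = y" using vinj unfolding inj_on_def by blast
        qed
        moreover have "\<Phi> ` T \<gamma> \<subseteq> Fn"
        proof
          fix g assume "g \<in> \<Phi> ` T \<gamma>"
          then obtain x where x: "x \<in> T \<gamma>" "g = \<Phi> x" by blast
          have "g \<in> Func ?Y (Field mu)"
          proof -
            have "\<forall>\<xi>\<in>?Y. f \<xi> x \<in> underS ?r \<gamma>" using x(1) unfolding T_def by (auto simp: underS_lt)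
            thus ?thesis using e(2) x(2) unfolding Func_def \<Phi>_def by auto
          qed
          thus "g \<in> Fn" unfolding Fn_def using epsF by blast
        qed
        ultimately have "|T \<gamma>| \<le>o |Fn|" using card_of_ordLeq[of "T \<gamma>" Fn] by blast
        thus ?thesis using ordLeq_ordIso_trans[OF _ FnI] by blast
      qed
      define h where "h = (\<lambda>\<gamma>. if \<gamma> \<in> ?F then (SOME x. x \<in> ?F \<and> (\<forall>j\<in>T \<gamma>. lt_in ?r j x)) else \<gamma>)"
      have h: "h \<gamma> \<in> ?F \<and> (\<forall>j\<in>T \<gamma>. lt_in ?r j (h \<gamma>))" if \<gamma>: "\<gamma> \<in> ?F" for \<gamma>
      proof -
        have "T \<gamma> \<subseteq> ?F" using SF unfolding T_def by blast
        hence "\<exists>x\<in>?F. \<forall>j\<in>T \<gamma>. lt_in ?r j x" using cs_bounded[OF mu muinf _ Tc[OF \<gamma>]] by blast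
        hence "\<exists>x. x \<in> ?F \<and> (\<forall>j\<in>T \<gamma>. lt_in ?r j x)" by blast
        from someI_ex[OF this] show ?thesis using \<gamma> unfolding h_def by simp
      qed
      define G where "G = insert h (insert (nx CE) ((\<lambda>\<xi>. nx (cl \<xi>)) ` ?Y))"
      have Gc: "|G| \<le>o mu"
      proof -
        have c0: "|?Y| \<le>o mu" using subset_Field_le[OF mu YF] .
        have c1: "|(\<lambda>\<xi>. nx (cl \<xi>)) ` ?Y| \<le>o mu" using ordLeq_transitive[OF card_of_image c0] .
        have c2: "|insert (nx CE) ((\<lambda>\<xi>. nx (cl \<xi>)) ` ?Y)| \<le>o mu" by (rule small_insert[OF mu muinf c1])
        show ?thesis unfolding G_def by (rule small_insert[OF mu muinf c2])
      qed
      have GF: "\<forall>g\<in>G. \<forall>k\<in>?F. g k \<in> ?F"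
      proof (intro ballI)
        fix g k assume g: "g \<in> G" and k: "k \<in> ?F"
        show "g k \<in> ?F"
        proof -
          consider "g = h" | "g = nx CE" | \<xi> where "g = nx (cl \<xi>)" using g unfolding G_def by blast
          thus ?thesis
          proof cases
            case 1 thus ?thesis using h[OF k] by simp
          next
            case 2 thus ?thesis using nx[OF CE(1) k] clubF[OF CE(1)] by auto
          next
            case (3 \<xi>) thus ?thesis using nx[OF conjunct1[OF cl[of \<xi>]] k] clubF[OF conjunct1[OF cl[of \<xi>]]] by auto
          qed
        qed
      qed
      obtain j where jF: "j \<in> ?F" and jcof: "cof_eq ?r j mu" and jbig: "mu <o Restr ?r (underS ?r j)"
        and jne: "underS ?r j \<noteq> {}" and jcl: "\<forall>g\<in>G. \<forall>k. lt_in ?r k j \<longrightarrow> lt_in ?r (g k) j"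
        using key_point[OF mu muinf lp Gc GF] by blast
      have inclub: "j \<in> C" if C: "club ?r C" and CG: "nx C \<in> G" for C
      proof -
        have step: "\<exists>c\<in>C \<inter> underS ?r j. lt_in ?r k c" if k: "k \<in> underS ?r j" for k
        proof -
          have kl: "lt_in ?r k j" using k by (simp add: underS_lt)
          have kF: "k \<in> ?F" using lt_in_Field[OF kl] by blast
          have "nx C k \<in> C" "lt_in ?r k (nx C k)" using nx[OF C kF] by auto
          moreover have "lt_in ?r (nx C k) j" using jcl CG kl by blast
          ultimately show ?thesis by (auto simp: underS_lt)
        qed
        have "C \<inter> underS ?r j \<noteq> {}" using jne step by blast
        thus ?thesis using C jF step unfolding club_def by blast
      qed
      have jE: "j \<in> E" using inclub[OF CE(1)] CE(2) jcof unfolding G_def by blast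
      have jreg: "\<forall>\<xi>\<in>?Y. lt_in ?r (f \<xi> j) j"
      proof
        fix \<xi> assume \<xi>: "\<xi> \<in> ?Y"
        show "lt_in ?r (f \<xi> j) j"
        proof (cases "underS mu \<xi> = {}")
          case False
          have "j \<in> cl \<xi>" using inclub[OF conjunct1[OF cl[of \<xi>]]] \<xi> unfolding G_def by blast
          thus ?thesis using cl[of \<xi>] \<xi> False by blast
        next
          case True
          have fF: "f \<xi> j \<in> ?F" and fmin: "underS ?r (f \<xi> j) = {}" using LI \<xi> True jF by auto
          show ?thesis
          proof (rule ccontr)
            assume nl: "\<not> lt_in ?r (f \<xi> j) j"
            have jf: "(j, f \<xi> j) \<in> ?r" using wo_not_lt_le[OF rwo fF jF nl] .
            show False
            proof (cases "j = f \<xi> j")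
              case True thus False using jne fmin by simp
            next
              case False
              hence "j \<in> underS ?r (f \<xi> j)" using jf by (simp add: underS_def)
              thus False using fmin by simp
            qed
          qed
        qed
      qed
      have jS: "j \<in> S" unfolding S_def using jF jE jcof jbig jreg by blast
      define V where "V = (\<lambda>\<xi>. f \<xi> j) ` ?Y"
      have Vsub: "V \<subseteq> underS ?r j" using jreg unfolding V_def by (auto simp: underS_lt)
      have Vc: "|V| <o mu"
        using ordLeq_ordLess_trans[OF card_of_image card_of_underS[OF mu epsF]] unfolding V_def .
      have "\<not> (\<forall>x\<in>underS ?r j. \<exists>v\<in>V. (x, v) \<in> ?r)"
      proof
        assume cofV: "\<forall>x\<in>underS ?r j. \<exists>v\<in>V. (x, v) \<in> ?r"
        have c2: "\<forall>A. A \<subseteq> underS ?r j \<and> (\<forall>x\<in>underS ?r j. \<exists>a\<in>A. (x, a) \<in> ?r) \<longrightarrow> mu \<le>o |A|"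
          using jcof unfolding cof_eq_def by (rule conjunct2)
        have "mu \<le>o |V|" using c2[rule_format, OF conjI[OF Vsub cofV]] .
        hence "mu <o mu" using ordLeq_ordLess_trans[OF _ Vc] by auto
        thus False using ordLess_irreflexive[of mu] by simp
      qed
      then obtain x where x: "x \<in> underS ?r j" and xv: "\<forall>v\<in>V. (x, v) \<notin> ?r" by blast
      have xl: "lt_in ?r x j" using x by (simp add: underS_lt)
      have xF: "x \<in> ?F" using lt_in_Field[OF xl] by blast
      have "\<forall>\<xi>\<in>?Y. lt_in ?r (f \<xi> j) x"
      proof
        fix \<xi> assume \<xi>: "\<xi> \<in> ?Y"
        have vV: "f \<xi> j \<in> V" using \<xi> unfolding V_def by blast
        have "lt_in ?r (f \<xi> j) j" using jreg \<xi> by blast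
        hence vF: "f \<xi> j \<in> ?F" using lt_in_Field[of ?r "f \<xi> j" j] by simp
        show "lt_in ?r (f \<xi> j) x"
        proof (rule ccontr)
          assume nlx: "\<not> lt_in ?r (f \<xi> j) x"
          have "(x, f \<xi> j) \<in> ?r" using wo_not_lt_le[OF rwo vF xF nlx] .
          thus False using xv vV by blast
        qed
      qed
      hence "j \<in> T x" unfolding T_def using jS by blast
      hence 1: "lt_in ?r j (h x)" using h[OF xF] by blast
      have hG: "h \<in> G" unfolding G_def by simp
      have 2: "lt_in ?r (h x) j" using jcl hG xl by blast
      have "lt_in ?r j j" using wo_lt_trans[OF rwo 1 2] .
      thus False by (simp add: lt_in_def)
    qed
    then obtain i j where ij: "i \<in> S" "j \<in> S" "lt_in ?r i j" "\<forall>\<xi>\<in>?Y. f \<xi> i = f \<xi> j" by blast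
    have "i \<in> E" "j \<in> E" "mu <o Restr ?r (underS ?r i)" "cof_eq ?r i mu" "cof_eq ?r j mu"
      using ij(1,2) unfolding S_def by auto
    then obtain u where u: "u \<in> P" "\<forall>z\<in>?Y. le (pp z i) u \<and> le (pp z j) u"
      using Win ij(3,4) by blast
    have Yne: "?Y \<noteq> {}" using lim by (simp add: limit_in_def)
    define z0 where "z0 = wo_rel.minim mu ?Y"
    have z0Y: "z0 \<in> ?Y" unfolding z0_def using wo_rel.minim_in[of mu ?Y] wo Yne YF by (simp add: wo_rel_def)
    have z0min: "(z0, x) \<in> mu" if "x \<in> ?Y" for x
      unfolding z0_def using wo_rel.minim_least[of mu ?Y x] wo that YF by (simp add: wo_rel_def)
    have "underS mu z0 = {}"
    proof (rule ccontr)
      assume "underS mu z0 \<noteq> {}"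
      then obtain x where x: "x \<in> underS mu z0" by blast
      have "x \<in> ?Y" using Ytrans[OF z0Y x] .
      hence "(z0, x) \<in> mu" by (rule z0min)
      moreover have "lt_in mu x z0" using x by (simp add: underS_lt)
      ultimately show False using wo_lt_asym[OF wo] by blast
    qed
    hence pz0: "pp z0 = a" using pp by simp
    have iF: "i \<in> ?F" and jF: "j \<in> ?F" using ij(1,2) unfolding S_def by auto
    have "a i \<noteq> a j" using a(1) iF jF ij(3) unfolding inj_on_def lt_in_def by blast
    moreover have "a i \<in> A" "a j \<in> A" using a(2) iF jF by auto
    moreover have "le (a i) u" "le (a j) u" using u(2) z0Y pz0 by auto
    ultimately show False using acA u(1) by blast
  qed
qed

end
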